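(* Let $n\ge3$, $x=(x',x_n)$, $\xi=(\xi',\xi_n)$, let $f\in C^\infty_0(\mathbb{R}^{n-1})$ and $K:=\nabla f$. Let $0<c<c'<1$ with $\frac{|K(x')|^2}{1+|K(x')|^2}<c$ for all $x'$, and let $\tilde\rho(\xi')$ be smooth with $\tilde\rho=1$ on $\{|\xi'|^2\le c'\}$ and support compactly contained in the open unit ball of $\mathbb{R}^{n-1}$. Let $p(x',\xi):=(1+|K|^2)\xi_n^2-2\xi_n(i-\xi'\cdot K)-(1-|\xi'|^2)$, $P_s:=\mathrm{Op}_h(\tilde\rho/p)$ and $R_s:=h^{-1}\big(\mathrm{Op}_h(p)P_s-\tilde\rho(hD')\big)$. Suppose $v\in L^r(\mathbb{R}^n)$, $1<r<\infty$, with $\mathrm{supp}\,v\subset\overline{\mathbb{R}^n_+}=\{x_n\ge0\}$. Then $\mathrm{supp}(P_sv)$ and $\mathrm{supp}(R_sv)$ are contained in $\overline{\mathbb{R}^n_+}$. In particular $P_sv|_{x_n=0}=0$.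
   Context: $\mathrm{Op}_h(a)u(x)=(2\pi h)^{-n}\iint e^{i(x-y)\cdot\xi/h}a(x,\xi)u(y)\,dy\,d\xi$; $\tilde\rho(hD')$ is the Fourier multiplier with symbol $\tilde\rho(\xi')$. (For $h$ small, $P_s$ maps $L^r$ boundedly into the semiclassical Sobolev space $W^{2,r}$, so the trace on $\{x_n=0\}$ is defined.) *)

theory Defs
  imports "HOL-Analysis.Analysis"
begin

definition tsupp :: "('a::topological_space \<Rightarrow> 'b::zero) \<Rightarrow> 'a set" where
  "tsupp g = closure {x. g x \<noteq> 0}"

definition pdiff :: "'a::real_normed_vector \<Rightarrow> ('a \<Rightarrow> 'b::real_normed_vector) \<Rightarrow> 'a \<Rightarrow> 'b" where
  "pdiff e g = (\<lambda>x. frechet_derivative g (at x) e)"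

definition smooth :: "('a::euclidean_space \<Rightarrow> 'b::real_normed_vector) \<Rightarrow> bool" where
  "smooth g \<longleftrightarrow> (\<forall>ds. set ds \<subseteq> Basis \<longrightarrow> (\<forall>x. foldr pdiff ds g differentiable (at x)))"

definition test_fun :: "('a::euclidean_space \<Rightarrow> complex) \<Rightarrow> bool" where
  "test_fun g \<longleftrightarrow> smooth g \<and> compact (tsupp g)"

definition grad :: "(real^'m \<Rightarrow> real) \<Rightarrow> real^'m \<Rightarrow> real^'m" where
  "grad f x' = (\<chi> j. frechet_derivative f (at x') (axis j 1))"

text \<open>Points of R^n are written x = (x', x_n) \<in> R^(n-1) \<times> R.\<close>

definition psym :: "(real^'m \<Rightarrow> real) \<Rightarrow> real^'m \<Rightarrow> (real^'m) \<times> real \<Rightarrow> complex" where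
  "psym f x' \<xi> = (let K = grad f x'; \<xi>' = fst \<xi>; \<xi>n = snd \<xi> in
     complex_of_real ((1 + (norm K)\<^sup>2) * \<xi>n\<^sup>2)
     - 2 * complex_of_real \<xi>n * (\<i> - complex_of_real (\<xi>' \<bullet> K))
     - complex_of_real (1 - (norm \<xi>')\<^sup>2))"

text \<open>Semiclassical quantization Op_h(a)u(x) = (2 pi h)^(-n) \<integral>\<integral> e^(i(x-y).xi/h) a(x,xi) u(y) dy dxi,
  with the xi-integral (absolutely convergent for the symbols used here) taken first.\<close>
definition Op_h :: "real \<Rightarrow> ('a::euclidean_space \<Rightarrow> 'a \<Rightarrow> complex) \<Rightarrow> ('a \<Rightarrow> complex) \<Rightarrow> 'a \<Rightarrow> complex" where
  "Op_h h a u x = complex_of_real ((2 * pi * h) powr (- real DIM('a))) *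
     (LINT y|lborel. (LINT \<xi>|lborel. cis ((x - y) \<bullet> \<xi> / h) * a x \<xi>) * u y)"

definition P_s :: "real \<Rightarrow> (real^'m \<Rightarrow> real) \<Rightarrow> (real^'m \<Rightarrow> complex)
     \<Rightarrow> ((real^'m) \<times> real \<Rightarrow> complex) \<Rightarrow> (real^'m) \<times> real \<Rightarrow> complex" where
  "P_s h f \<rho> = Op_h h (\<lambda>x \<xi>. \<rho> (fst \<xi>) / psym f (fst x) \<xi>)"

text \<open>Fourier multiplier rho~(hD') acting in the x' variables only.\<close>
definition mult_hD' :: "real \<Rightarrow> (real^'m \<Rightarrow> complex) \<Rightarrow> ((real^'m) \<times> real \<Rightarrow> complex)
     \<Rightarrow> (real^'m) \<times> real \<Rightarrow> complex" where
  "mult_hD' h \<rho> u x = complex_of_real ((2 * pi * h) powr (- real CARD('m))) *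
     (LINT y'|lborel. (LINT \<xi>'|lborel. cis ((fst x - y') \<bullet> \<xi>' / h) * \<rho> \<xi>') * u (y', snd x))"

definition hD :: "real \<Rightarrow> 'a::real_normed_vector \<Rightarrow> ('a \<Rightarrow> complex) \<Rightarrow> 'a \<Rightarrow> complex" where
  "hD h e g = (\<lambda>x. - \<i> * complex_of_real h * pdiff e g x)"

text \<open>Op_h(p) is the differential operator
  (1+|K|^2)(hD_n)^2 - 2 i hD_n + 2 \<Sum>_j K_j hD_j hD_n - 1 + \<Sum>_j (hD_j)^2.
  Its formal transpose (w.r.t. the bilinear pairing \<integral> w g), acting on test functions:
  (1+|K|^2)(hD_n)^2 g + 2 i hD_n g + 2 \<Sum>_j hD_j (K_j hD_n g) - g + \<Sum>_j (hD_j)^2 g.\<close>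
definition Op_p_transp :: "real \<Rightarrow> (real^'m \<Rightarrow> real) \<Rightarrow> ((real^'m) \<times> real \<Rightarrow> complex)
     \<Rightarrow> (real^'m) \<times> real \<Rightarrow> complex" where
  "Op_p_transp h f g x =
     (let en = (0::real^'m, 1::real); e = (\<lambda>j. (axis j (1::real), 0::real)) in
       complex_of_real (1 + (norm (grad f (fst x)))\<^sup>2) * hD h en (hD h en g) x
     + 2 * \<i> * hD h en g x
     + 2 * (\<Sum>j\<in>UNIV. hD h (e j) (\<lambda>y. complex_of_real (grad f (fst y) $ j) * hD h en g y) x)
     - g x
     + (\<Sum>j\<in>UNIV. hD h (e j) (hD h (e j) g) x))"

text \<open>The distribution R_s v = h^(-1)(Op_h(p) P_s v - rho~(hD') v), paired with a test function g.\<close>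
definition R_s_pair :: "real \<Rightarrow> (real^'m \<Rightarrow> real) \<Rightarrow> (real^'m \<Rightarrow> complex)
     \<Rightarrow> ((real^'m) \<times> real \<Rightarrow> complex) \<Rightarrow> ((real^'m) \<times> real \<Rightarrow> complex) \<Rightarrow> complex" where
  "R_s_pair h f \<rho> v g = complex_of_real (1 / h) *
     ((LINT x|lborel. P_s h f \<rho> v x * Op_p_transp h f g x)
      - (LINT x|lborel. mult_hD' h \<rho> v x * g x))"

end

theory Submission
  imports Defs "HOL-Complex_Analysis.Complex_Analysis"
begin


definition qq :: "real \<Rightarrow> real \<Rightarrow> real \<Rightarrow> complex \<Rightarrow> complex" where
  "qq A b C z = of_real A * z^2 - 2 * z * (\<i> - of_real b) - of_real C"

lemma qq_nz:
  assumes A: "A > 0" and C: "C > 0" and w: "Im z \<le> 0"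
  shows "qq A b C z \<noteq> 0"
proof
  assume q0: "qq A b C z = 0"
  define a where "a = Re z"
  define w where "w = Im z"
  have z: "z = Complex a w" by (simp add: a_def w_def)
  have re: "A*(a^2-w^2) + 2*a*b + 2*w - C = 0" and im: "a*(A*w-1) + w*b = 0"
  proof -
    have "Re (qq A b C z) = A*(a^2-w^2) + 2*a*b + 2*w - C"
      unfolding z qq_def by (simp add: power2_eq_square algebra_simps)
    moreover have "Im (qq A b C z) = 2*(a*(A*w-1) + w*b)"
      unfolding z qq_def by (simp add: power2_eq_square algebra_simps)
    ultimately show "A*(a^2-w^2) + 2*a*b + 2*w - C = 0" "a*(A*w-1) + w*b = 0" using q0 by auto
  qed
  show False
  proof (cases "w = 0")
    case True
    then show False using re im C by simp
  next
    case False
    then have wn: "w < 0" using w w_def by simp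
    have "w*(A*(a^2-w^2) + 2*a*b + 2*w - C) = a^2*(2 - A*w) - A*w^3 + 2*w^2 - C*w"
    proof -
      have "w*(2*a*b) = 2*a*(w*b)" by simp
      also have "\<dots> = 2*a*(-(a*(A*w-1)))" proof -
        have "w*b = -(a*(A*w-1))" using im by linarith
        then show ?thesis by simp
      qed
      finally show ?thesis by (simp add: algebra_simps power2_eq_square power3_eq_cube)
    qed
    moreover have "a^2*(2 - A*w) \<ge> 0" using A wn mult_pos_neg[of A w] by (intro mult_nonneg_nonneg) auto
    moreover have "- A*w^3 > 0" using A wn
      by (simp add: power3_eq_cube mult_pos_neg mult_neg_neg)
    moreover have "- C*w > 0" using C wn by (simp add: mult_pos_neg)
    moreover have "w^2 \<ge> 0" by simp
    ultimately show False using re by simp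
  qed
qed

lemma qq_bound:
  assumes A: "A > 0" and C: "C > 0" and R: "R \<ge> max 1 ((4*(1+\<bar>b\<bar>)+2*C)/A)" and nz: "norm z = R"
  shows "norm (qq A b C z) \<ge> A*R^2/2"
proof -
  have R1: "R \<ge> 1" using R by simp
  have RA: "A*R \<ge> 4*(1+\<bar>b\<bar>)+2*C" using R A by (simp add: field_simps)
  have n1: "norm (of_real A * z^2) = A*R^2" using A nz by (simp add: norm_mult norm_power)
  have "norm (\<i> - of_real b) \<le> 1 + \<bar>b\<bar>"
    using norm_triangle_ineq4[of \<i> "of_real b"] by simp
  then have n2: "norm (2 * z * (\<i> - of_real b)) \<le> 2*R*(1+\<bar>b\<bar>)"
    using nz R1 by (simp add: norm_mult mult_left_mono)
  have "of_real A * z^2 = qq A b C z + 2 * z * (\<i> - of_real b) + of_real C"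
    by (simp add: qq_def)
  then have "A*R^2 \<le> norm (qq A b C z) + 2*R*(1+\<bar>b\<bar>) + C"
    using n1 n2 norm_triangle_ineq[of "qq A b C z + 2 * z * (\<i> - of_real b)" "of_real C"]
      norm_triangle_ineq[of "qq A b C z" "2 * z * (\<i> - of_real b)"] C
    by (smt (verit) norm_of_real)
  moreover have "A*R^2/2 \<ge> 2*R*(1+\<bar>b\<bar>) + C"
  proof -
    have "A*R^2/2 = R*(A*R)/2" by (simp add: power2_eq_square)
    also have "\<dots> \<ge> R*(4*(1+\<bar>b\<bar>)+2*C)/2" using RA R1 by (intro divide_right_mono mult_left_mono) auto
    moreover have "R*(4*(1+\<bar>b\<bar>)+2*C)/2 = 2*R*(1+\<bar>b\<bar>) + R*C" by (simp add: algebra_simps)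
    moreover have "R*C \<ge> C" using R1 C by simp
    ultimately show ?thesis by linarith
  qed
  ultimately show ?thesis by linarith
qed

lemma F_bound:
  assumes A: "A > 0" and C: "C > 0" and t: "\<tau> < 0"
    and R: "R \<ge> max 1 ((4*(1+\<bar>b\<bar>)+2*C)/A)" and nz: "norm z = R" and im: "Im z \<le> 0"
  shows "norm (exp (\<i> * of_real \<tau> * z) / qq A b C z) \<le> 2/(A*R^2)"
proof -
  have R1: "R \<ge> 1" using R by simp
  have e: "norm (exp (\<i> * of_real \<tau> * z)) \<le> 1"
    using t im by (simp add: mult_nonpos_nonpos)
  have q: "norm (qq A b C z) \<ge> A*R^2/2" by (rule qq_bound[OF A C R nz])
  have pos: "A*R^2/2 > 0" using A R1 by simp
  have "norm (exp (\<i> * of_real \<tau> * z) / qq A b C z) = norm (exp (\<i> * of_real \<tau> * z)) / norm (qq A b C z)"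
    by (simp add: norm_divide)
  also have "\<dots> \<le> 1 / (A*R^2/2)"
    using e q pos by (intro frac_le) auto
  finally show ?thesis by simp
qed

lemma seg_integral:
  assumes A: "A > 0" and C: "C > 0" and t: "\<tau> < 0"
    and R: "R \<ge> max 1 ((4*(1+\<bar>b\<bar>)+2*C)/A)"
  shows "norm (integral {-R..R} (\<lambda>s. exp (\<i> * of_real \<tau> * of_real s) / qq A b C (of_real s))) \<le> 2*pi/(A*R)"
proof -
  define F where "F = (\<lambda>z. exp (\<i> * of_real \<tau> * z) / qq A b C z)"
  define S where "S = {z::complex. Im z \<le> 0}"
  have R1: "R \<ge> 1" using R by simp
  have contq: "continuous_on T (qq A b C)" for T unfolding qq_def by (intro continuous_intros)
  have cont: "continuous_on S F"
    unfolding F_def using qq_nz[OF A C] by (intro continuous_intros contq) (auto simp: S_def)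
  have diff: "F field_differentiable at x" if "x \<in> S" for x
  proof -
    have "qq A b C x \<noteq> 0" using qq_nz[OF A C] that by (auto simp: S_def)
    then show ?thesis unfolding F_def qq_def field_differentiable_def
      by (auto intro!: derivative_eq_intros)
  qed
  define arc where "arc = part_circlepath 0 R (-pi) 0"
  define lp where "lp = linepath (complex_of_real R) (complex_of_real (-R))"
  have arcS: "path_image arc \<subseteq> S"
  proof
    fix z assume "z \<in> path_image arc"
    then obtain x where x: "x \<in> closed_segment (-pi) 0" "z = 0 + R * cis x"
      unfolding arc_def path_image_part_circlepath' by auto
    have "-pi \<le> x" "x \<le> 0" using x(1) by (auto simp: closed_segment_eq_real_ivl)
    then have "sin (-x) \<ge> 0" by (intro sin_ge_zero) auto
    then have "sin x \<le> 0" by simp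
    then show "z \<in> S" using x R1 by (simp add: S_def mult_nonneg_nonpos)
  qed
  have lpS: "path_image lp \<subseteq> S"
    unfolding lp_def S_def path_image_linepath by (auto simp: closed_segment_def)
  have ends: "pathfinish arc = pathstart lp" "pathfinish lp = pathstart arc"
    unfolding arc_def lp_def by (simp_all add: exp_minus exp_pi_i)
  have "(F has_contour_integral 0) (arc +++ lp)"
  proof (rule Cauchy_theorem_convex[OF cont _ finite.emptyI])
    show "convex S" unfolding S_def by (rule convex_halfspace_Im_le)
    show "F field_differentiable at x" if "x \<in> interior S - {}" for x
      using that interior_subset diff by blast
    show "valid_path (arc +++ lp)" using ends by (simp add: arc_def lp_def valid_path_join)
    show "path_image (arc +++ lp) \<subseteq> S" using arcS lpS ends by (simp add: path_image_join)
    show "pathfinish (arc +++ lp) = pathstart (arc +++ lp)" using ends by simp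
  qed
  then have "contour_integral (arc +++ lp) F = 0" by (rule contour_integral_unique)
  moreover have ia: "F contour_integrable_on arc"
    unfolding arc_def by (rule contour_integrable_continuous_part_circlepath)
      (rule continuous_on_subset[OF cont arcS[unfolded arc_def]])
  moreover have il: "F contour_integrable_on lp"
    unfolding lp_def by (rule contour_integrable_continuous_linepath)
      (rule continuous_on_subset[OF cont lpS[unfolded lp_def path_image_linepath]])
  ultimately have sum0: "contour_integral arc F + contour_integral lp F = 0"
    by (simp add: arc_def lp_def)
  have "contour_integral lp F = - contour_integral (linepath (complex_of_real (-R)) (complex_of_real R)) F"
    unfolding lp_def by (metis contour_integral_reversepath reversepath_linepath valid_path_linepath)
  also have "contour_integral (linepath (complex_of_real (-R)) (complex_of_real R)) F
      = integral {-R..R} (\<lambda>s. F (of_real s))"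
    using R1 by (subst contour_integral_linepath_Reals_eq) auto
  finally have eq: "integral {-R..R} (\<lambda>s. F (of_real s)) = contour_integral arc F"
    using sum0 by (metis add.commute add_left_cancel eq_neg_iff_add_eq_0)
  have "norm (contour_integral arc F) \<le> 2/(A*R^2) * R * \<bar>0 - (-pi)\<bar>"
    unfolding arc_def
  proof (rule contour_integral_bound_part_circlepath)
    show "F contour_integrable_on part_circlepath 0 R (- pi) 0" using ia by (simp add: arc_def)
    show "0 \<le> 2/(A*R^2)" using A by simp
    show "0 \<le> R" using R1 by simp
    fix z assume z: "z \<in> path_image (part_circlepath 0 R (- pi) 0)"
    then have "norm z = R" using in_path_image_part_circlepath[OF z] R1 by simp
    moreover have "Im z \<le> 0" using arcS z by (auto simp: arc_def S_def)
    ultimately show "norm (F z) \<le> 2/(A*R^2)" unfolding F_def by (rule F_bound[OF A C t R])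
  qed
  also have "\<dots> = 2*pi/(A*R)" using R1 by (simp add: power2_eq_square field_simps)
  finally show ?thesis using eq by (simp add: F_def)
qed

lemma line_integral_zero:
  assumes A: "A > 0" and C: "C > 0" and t: "\<tau> < 0"
  shows "(LINT s|lborel. exp (\<i> * of_real \<tau> * of_real s) / qq A b C (of_real s)) = 0"
proof (cases "integrable lborel (\<lambda>s. exp (\<i> * of_real \<tau> * of_real s) / qq A b C (of_real s))")
  case False
  then show ?thesis by (rule not_integrable_integral_eq)
next
  case True
  define G where "G = (\<lambda>s::real. exp (\<i> * of_real \<tau> * of_real s) / qq A b C (of_real s))"
  have int: "integrable lborel G" using True by (simp add: G_def)
  define I where "I = (\<lambda>n::nat. integral {- real n..real n} G)"
  have setI: "(LINT s:{- real n..real n}|lborel. G s) = I n" for n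
    unfolding I_def
    by (rule set_borel_integral_eq_integral(2)) (simp add: set_integrable_def integrable_mult_indicator int)
  have lim1: "(\<lambda>n. LINT s:{- real n..real n}|lborel. G s) \<longlonglongrightarrow> (LINT s|lborel. G s)"
    unfolding set_lebesgue_integral_def
  proof (rule integral_dominated_convergence[where w="\<lambda>x. norm (G x)"])
    show "G \<in> borel_measurable lborel" using int by auto
    show "(\<lambda>x. indicator {- real i..real i} x *\<^sub>R G x) \<in> borel_measurable lborel" for i
      using int by auto
    show "integrable lborel (\<lambda>x. norm (G x))" using int by auto
    show "AE x in lborel. (\<lambda>i. indicator {- real i..real i} x *\<^sub>R G x) \<longlonglongrightarrow> G x"
    proof (rule AE_I2, rule tendsto_eventually)
      fix x :: real
      obtain N :: nat where "\<bar>x\<bar> \<le> real N" using real_arch_simple by blast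
      then show "\<forall>\<^sub>F i in sequentially. indicator {- real i..real i} x *\<^sub>R G x = G x"
        unfolding eventually_sequentially
        by (intro exI[of _ N]) (auto simp: indicator_def)
    qed
    show "AE x in lborel. norm (indicator {- real i..real i} x *\<^sub>R G x) \<le> norm (G x)" for i
      by (auto simp: indicator_def)
  qed
  define R0 where "R0 = max 1 ((4*(1+\<bar>b\<bar>)+2*C)/A)"
  have lim2: "I \<longlonglongrightarrow> 0"
  proof (rule Lim_null_comparison)
    obtain N :: nat where N: "R0 \<le> real N" using real_arch_simple by blast
    show "\<forall>\<^sub>F n in sequentially. norm (I n) \<le> (2*pi/A) / real n"
      unfolding eventually_sequentially
    proof (intro exI[of _ N] allI impI)
      fix n assume "N \<le> n"
      then have "R0 \<le> real n" using N by linarith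
      then have "norm (I n) \<le> 2*pi/(A*real n)"
        unfolding I_def G_def R0_def by (intro seg_integral[OF A C t]) auto
      then show "norm (I n) \<le> (2*pi/A) / real n" by simp
    qed
    show "(\<lambda>n. (2*pi/A) / real n) \<longlonglongrightarrow> 0" by (rule lim_const_over_n)
  qed
  from lim1 have "I \<longlonglongrightarrow> (LINT s|lborel. G s)" by (simp add: setI)
  with lim2 have "(LINT s|lborel. G s) = 0" using LIMSEQ_unique by blast
  then show ?thesis by (simp add: G_def)
qed



lemma tsupp_ball:
  assumes "tsupp \<rho> \<subseteq> ball 0 1" "\<rho> \<xi> \<noteq> 0"
  shows "norm \<xi> < 1"
  using assms closure_subset[of "{x. \<rho> x \<noteq> 0}"] unfolding tsupp_def by (auto simp: dist_norm)

lemma kernel_zero: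
  fixes f :: "real^'m \<Rightarrow> real" and \<rho> :: "real^'m \<Rightarrow> complex"
    and x y :: "(real^'m) \<times> real" and h :: real
  assumes h: "h > 0" and sup: "tsupp \<rho> \<subseteq> ball 0 1" and xy: "snd x < snd y"
  shows "(LINT \<xi>|lborel. cis ((x - y) \<bullet> \<xi> / h) * (\<rho> (fst \<xi>) / psym f (fst x) \<xi>)) = 0"
proof (cases "integrable lborel (\<lambda>\<xi>. cis ((x - y) \<bullet> \<xi> / h) * (\<rho> (fst \<xi>) / psym f (fst x) \<xi>))")
  case False
  then show ?thesis by (rule not_integrable_integral_eq)
next
  case True
  let ?\<Phi> = "\<lambda>\<xi>. cis ((x - y) \<bullet> \<xi> / h) * (\<rho> (fst \<xi>) / psym f (fst x) \<xi>)"
  have P: "pair_sigma_finite (lborel :: (real^'m) measure) (lborel :: real measure)"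
    by (simp add: pair_sigma_finite_def lborel.sigma_finite_measure_axioms)
  have int: "integrable (lborel \<Otimes>\<^sub>M lborel) ?\<Phi>" using True by (simp add: lborel_prod)
  have "(LINT \<xi>|lborel. ?\<Phi> \<xi>) = (LINT \<xi>|(lborel \<Otimes>\<^sub>M lborel). ?\<Phi> \<xi>)" by (simp add: lborel_prod)
  also have "\<dots> = (LINT \<xi>'|lborel. LINT s|lborel. ?\<Phi> (\<xi>', s))"
    by (rule pair_sigma_finite.integral_fst'[OF P int, symmetric])
  also have "\<dots> = (LINT \<xi>'|(lborel::(real^'m) measure). (0::complex))"
  proof -
   have "(LINT s|lborel. ?\<Phi> (\<xi>', s)) = 0" for \<xi>' :: "real^'m"
    proof (cases "\<rho> \<xi>' = 0")
      case True
      then show ?thesis by simp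
    next
      case False
      have n1: "norm \<xi>' < 1" using tsupp_ball[OF sup False] .
      define K where "K = grad f (fst x)"
      define A where "A = 1 + (norm K)\<^sup>2"
      define b where "b = \<xi>' \<bullet> K"
      define C where "C = 1 - (norm \<xi>')\<^sup>2"
      define \<tau> where "\<tau> = (snd x - snd y) / h"
      have A: "A > 0" unfolding A_def by (simp add: add_pos_nonneg)
      have C: "C > 0" unfolding C_def using n1
        using abs_square_less_1[of "norm \<xi>'"] by simp
      have t: "\<tau> < 0" unfolding \<tau>_def using xy h by (simp add: divide_neg_pos)
      have eq: "?\<Phi> (\<xi>', s) = (cis ((fst x - fst y) \<bullet> \<xi>' / h) * \<rho> \<xi>') *
          (exp (\<i> * of_real \<tau> * of_real s) / qq A b C (of_real s))" for s
      proof -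
        have "(x - y) \<bullet> (\<xi>', s) = (fst x - fst y) \<bullet> \<xi>' + (snd x - snd y) * s"
          by (cases x, cases y) simp
        then have e2: "((x - y) \<bullet> (\<xi>', s)) / h = (fst x - fst y) \<bullet> \<xi>' / h + \<tau> * s"
          using h by (simp add: \<tau>_def field_simps)
        have e3: "cis (\<tau> * s) = exp (\<i> * of_real \<tau> * of_real s)"
          by (simp add: cis_conv_exp mult.assoc)
        have c: "cis ((x - y) \<bullet> (\<xi>', s) / h) = cis ((fst x - fst y) \<bullet> \<xi>' / h) * exp (\<i> * of_real \<tau> * of_real s)"
          unfolding e2 e3[symmetric] by (simp add: cis_mult)
        have p: "psym f (fst x) (\<xi>', s) = qq A b C (of_real s)"
          unfolding psym_def qq_def Let_def A_def b_def C_def K_def by simp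
        show ?thesis using c p by simp
      qed
      have "(LINT s|lborel. ?\<Phi> (\<xi>', s)) = (cis ((fst x - fst y) \<bullet> \<xi>' / h) * \<rho> \<xi>') *
          (LINT s|lborel. exp (\<i> * of_real \<tau> * of_real s) / qq A b C (of_real s))"
        by (simp only: eq integral_mult_right_zero)
      also have "\<dots> = 0" using line_integral_zero[OF A C t] by simp
      finally show ?thesis .
    qed
   then show ?thesis by simp
  qed
  also have "\<dots> = 0" by simp
  finally show ?thesis .
qed

lemma null_snd:
  assumes "N \<in> null_sets (lborel :: real measure)"
  shows "{x :: (real^'m) \<times> real. snd x \<in> N} \<in> null_sets lborel"
proof -
  have "(UNIV :: (real^'m) set) \<times> N \<in> null_sets (lborel \<Otimes>\<^sub>M lborel)"
    using assms by (intro lborel.times_in_null_sets2) auto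
  moreover have "{x :: (real^'m) \<times> real. snd x \<in> N} = UNIV \<times> N" by auto
  ultimately show ?thesis by (simp add: lborel_prod)
qed

lemma hD_zero:
  assumes U: "open U" and G: "\<And>y. y \<in> U \<Longrightarrow> G y = 0" and y: "y \<in> U"
  shows "hD h e G y = 0"
proof -
  have "(G has_derivative (\<lambda>_. 0)) (at y)"
    by (rule has_derivative_transform_within_open[OF has_derivative_const U y]) (simp add: G)
  then have "frechet_derivative G (at y) = (\<lambda>_. 0)" by (simp add: frechet_derivative_at[symmetric])
  then show ?thesis by (simp add: hD_def pdiff_def)
qed

lemma Op_p_transp_zero:
  assumes x: "x \<notin> tsupp g"
  shows "Op_p_transp h f g x = 0"
proof -
  define U where "U = - tsupp g"
  have U: "open U" unfolding U_def tsupp_def by auto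
  have xU: "x \<in> U" using x by (simp add: U_def)
  have g0: "\<And>y. y \<in> U \<Longrightarrow> g y = 0"
    using closure_subset[of "{x. g x \<noteq> 0}"] by (auto simp: U_def tsupp_def)
  have h1: "\<And>e y. y \<in> U \<Longrightarrow> hD h e g y = 0" by (rule hD_zero[OF U g0])
  have h2: "\<And>e e' y. y \<in> U \<Longrightarrow> hD h e (hD h e' g) y = 0" by (rule hD_zero[OF U h1])
  have h3: "\<And>e e' y j. y \<in> U \<Longrightarrow>
      hD h e (\<lambda>y. complex_of_real (grad f (fst y) $ j) * hD h e' g y) y = 0"
    by (rule hD_zero[OF U]) (simp add: h1)
  show ?thesis unfolding Op_p_transp_def Let_def
    using xU by (simp add: h1 h2 h3 g0)
qed

theorem proposition5p7:
  fixes f :: "real^'m \<Rightarrow> real" and \<rho> :: "real^'m \<Rightarrow> complex"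
    and v :: "(real^'m) \<times> real \<Rightarrow> complex" and c c' h r :: real
  assumes n_ge_3: "CARD('m) \<ge> 2"
    and f_smooth: "smooth f" and f_cpt: "compact (tsupp f)"
    and c_pos: "0 < c" and cc': "c < c'" and c'_lt1: "c' < 1"
    and K_bound: "\<forall>x'. (norm (grad f x'))\<^sup>2 / (1 + (norm (grad f x'))\<^sup>2) < c"
    and \<rho>_smooth: "smooth \<rho>"
    and \<rho>_one: "\<forall>\<xi>'. (norm \<xi>')\<^sup>2 \<le> c' \<longrightarrow> \<rho> \<xi>' = 1"
    and \<rho>_supp: "compact (tsupp \<rho>)" "tsupp \<rho> \<subseteq> ball 0 1"
    and h_pos: "0 < h"
    and r: "1 < r"
    and v_meas: "v \<in> borel_measurable lborel"
    and v_Lr: "integrable lborel (\<lambda>x. norm (v x) powr r)"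
    and v_supp: "AE x in lborel. snd x < 0 \<longrightarrow> v x = 0"
  shows "(\<forall>x. snd x < 0 \<longrightarrow> P_s h f \<rho> v x = 0)
       \<and> (\<forall>g. test_fun g \<and> tsupp g \<subseteq> {x. snd x < 0} \<longrightarrow> R_s_pair h f \<rho> v g = 0)
       \<and> (\<forall>x'. P_s h f \<rho> v (x', 0) = 0)"
proof -
  have vprod: "AE y in lborel. snd y < 0 \<longrightarrow> v y = 0" by (rule v_supp)
  have ne0: "AE y in (lborel :: ((real^'m) \<times> real) measure). snd y \<noteq> 0"
  proof (rule AE_I')
    show "{x :: (real^'m) \<times> real. snd x \<in> {0}} \<in> null_sets lborel"
      by (rule null_snd) (simp add: finite_imp_null_set_lborel)
  qed auto
  have Pzero: "P_s h f \<rho> v x = 0" if x: "snd x \<le> 0" for x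
  proof -
    have "AE y in lborel. (LINT \<xi>|lborel. cis ((x - y) \<bullet> \<xi> / h) * (\<rho> (fst \<xi>) / psym f (fst x) \<xi>)) * v y = 0"
      using vprod ne0
    proof eventually_elim
      case (elim y)
      show ?case
      proof (cases "snd y < 0")
        case True then show ?thesis using elim by simp
      next
        case False
        then have "snd x < snd y" using elim x by simp
        then show ?thesis using kernel_zero[OF h_pos \<rho>_supp(2)] by simp
      qed
    qed
    then have "(LINT y|lborel. (LINT \<xi>|lborel. cis ((x - y) \<bullet> \<xi> / h) * (\<rho> (fst \<xi>) / psym f (fst x) \<xi>)) * v y) = 0"
      by (rule integral_eq_zero_AE)
    then show ?thesis unfolding P_s_def Op_h_def by simp
  qed
  have part2: "R_s_pair h f \<rho> v g = 0" if g: "test_fun g \<and> tsupp g \<subseteq> {x. snd x < 0}" for g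
  proof -
    have gneg: "snd x < 0" if "g x \<noteq> 0" for x
      using g that closure_subset[of "{x. g x \<noteq> 0}"] unfolding tsupp_def by auto
    have i1: "(LINT x|lborel. P_s h f \<rho> v x * Op_p_transp h f g x) = 0"
    proof -
      have "P_s h f \<rho> v x * Op_p_transp h f g x = 0" for x
      proof (cases "snd x < 0")
        case True then show ?thesis using Pzero by simp
      next
        case False
        then have "x \<notin> tsupp g" using g by auto
        then show ?thesis by (simp add: Op_p_transp_zero)
      qed
      then show ?thesis by (intro integral_eq_zero_AE AE_I2) blast
    qed
    have vmeas2[measurable]: "v \<in> borel_measurable ((lborel :: (real^'m) measure) \<Otimes>\<^sub>M (lborel :: real measure))"
      using v_meas by (simp add: lborel_prod)
    have P: "pair_sigma_finite (lborel :: (real^'m) measure) (lborel :: real measure)"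
      by (simp add: pair_sigma_finite_def lborel.sigma_finite_measure_axioms)
    have "AE z in ((lborel :: (real^'m) measure) \<Otimes>\<^sub>M (lborel :: real measure)). snd z < 0 \<longrightarrow> v z = 0"
      unfolding lborel_prod by (rule v_supp)
    then have ae1: "AE y' in (lborel :: (real^'m) measure). AE t in (lborel :: real measure). t < 0 \<longrightarrow> v (y', t) = 0"
      using pair_sigma_finite.AE_pair[OF P] by fastforce
    have "AE t in (lborel :: real measure). AE y' in (lborel :: (real^'m) measure). t < 0 \<longrightarrow> v (y', t) = 0"
    proof -
      have mset: "{x \<in> space ((lborel :: (real^'m) measure) \<Otimes>\<^sub>M (lborel :: real measure)).
          (\<lambda>y' t. t < 0 \<longrightarrow> v (y', t) = 0) (fst x) (snd x)} \<in> sets (lborel \<Otimes>\<^sub>M lborel)"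
        by (simp only: prod.collapse) measurable
      show ?thesis using pair_sigma_finite.AE_commute[OF P mset] ae1 by simp
    qed
    then obtain N where N: "{t \<in> space lborel. \<not> (AE y' in (lborel :: (real^'m) measure). t < 0 \<longrightarrow> v (y', t) = 0)} \<subseteq> N"
        "emeasure lborel N = 0" "N \<in> sets lborel"
      by (rule AE_E)
    have Nnull: "N \<in> null_sets lborel" using N by auto
    have "AE x in lborel. mult_hD' h \<rho> v x * g x = 0"
    proof (rule AE_I'[OF null_snd[OF Nnull]])
      show "{x \<in> space lborel. \<not> mult_hD' h \<rho> v x * g x = 0} \<subseteq> {x. snd x \<in> N}"
      proof safe
        fix x :: "(real^'m) \<times> real"
        assume ne: "mult_hD' h \<rho> v x * g x \<noteq> 0"
        show "snd x \<in> N"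
        proof (rule ccontr)
          assume "snd x \<notin> N"
          then have ae: "AE y' in (lborel :: (real^'m) measure). snd x < 0 \<longrightarrow> v (y', snd x) = 0"
            using N(1) by auto
          have gx: "g x \<noteq> 0" using ne by auto
          then have sx: "snd x < 0" by (rule gneg)
          have "AE y' in lborel. (LINT \<xi>'|lborel. cis ((fst x - y') \<bullet> \<xi>' / h) * \<rho> \<xi>') * v (y', snd x) = 0"
            using ae by eventually_elim (simp add: sx)
          then have "mult_hD' h \<rho> v x = 0"
            unfolding mult_hD'_def by (simp add: integral_eq_zero_AE)
          then show False using ne by simp
        qed
      qed
    qed
    then have i2: "(LINT x|lborel. mult_hD' h \<rho> v x * g x) = 0" by (rule integral_eq_zero_AE)
    show ?thesis unfolding R_s_pair_def using i1 i2 by simp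
  qed
  show ?thesis using Pzero part2 by auto
qed

end
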